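(* For every language $L\subseteq\Sigma^+$: if $L\in\mathtt{incl}$-$\mathtt{ESO}$-$\mathtt{HORN}$, then $(\Sigma^+\setminus L)\in LinConj$.
   Context: Fix a finite alphabet $\Sigma$. A nonempty word $w=w_1\cdots w_n$ is represented by the structure $\langle w\rangle=([1,n];(Q_s)_{s\in\Sigma},\mathtt{min},\mathtt{max},\mathtt{suc},\mathtt{pred})$ with $Q_s(i)\iff w_i=s$, $\mathtt{min}(i)\iff i=1$, $\mathtt{max}(i)\iff i=n$, $\mathtt{suc}(i)=\min(i+1,n)$, $\mathtt{pred}(i)=\max(i-1,1)$. For an integer $a$, $x+a$ denotes $\mathtt{suc}^a(x)$ if $a\ge0$ and $\mathtt{pred}^{-a}(x)$ if $a<0$; $y-b=\mathtt{pred}^b(y)$. An inclusion Horn formula is $\Phi=\exists\mathbf{R}\forall x\forall y\,\psi(x,y)$, $\mathbf{R}$ a finite set of binary relation symbols, $\psi$ a conjunction of Horn clauses over $\{(Q_s)_{s\in\Sigma},\mathtt{min},\mathtt{max},\mathtt{suc},\mathtt{pred}\}\cup\mathbf{R}\cup\{=,\le,<\}$, each of the form $x\le y\wedge\delta_1\wedge\cdots\wedge\delta_r\to\delta_0$ with $\delta_0$ an atom $R(x,y)$ ($R\in\mathbf{R}$) or $\bot$, each $\delta_i$ one of: $U(x+a)$, $\neg U(x+a)$, $U(y+a)$, $\neg U(y+a)$ for $U\in\{(Q_s)_{s\in\Sigma},\mathtt{min},\mathtt{max}\}$, $a\in\mathbb Z$; $x=y$ or $x<y$; $S(x+a,y-b)\wedge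 x+a\le y-b$ with $S\in\mathbf{R}$, $a,b\ge0$. $\mathtt{incl}$-$\mathtt{ESO}$-$\mathtt{HORN}$ is the class of languages $\{w\in\Sigma^+:\langle w\rangle\models\Phi\}$. A linear conjunctive grammar is $G=(\Sigma,N,P,S)$ with nonterminals $N$, start symbol $S\in N$, and a finite set $P$ of rules $A\to\alpha_1\&\cdots\&\alpha_k$ ($k\ge1$), each $\alpha_i\in\Sigma^*\cup\Sigma^*N\Sigma^*$. The languages $(L(A))_{A\in N}$ form the least (componentwise) solution of $L(A)=\bigcup_{(A\to\alpha_1\&\cdots\&\alpha_k)\in P}\bigcap_iL(\alpha_i)$, where $L(uBv)=uL(B)v$, $L(u)=\{u\}$ for $u,v\in\Sigma^*$, $B\in N$; $L(G)=L(S)$. $LinConj$ is the class of languages generated by such grammars. *)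

theory Defs
  imports Main
begin

text \<open>A word w of length n is viewed as the structure on positions 1..n.
  Position i carries letter w ! (i - 1).\<close>

definition suc_pos :: "nat \<Rightarrow> nat \<Rightarrow> nat" where
  "suc_pos n i = min (i + 1) n"

definition pred_pos :: "nat \<Rightarrow> nat \<Rightarrow> nat" where
  "pred_pos n i = max (i - 1) 1"

definition shift :: "nat \<Rightarrow> nat \<Rightarrow> int \<Rightarrow> nat" where
  "shift n x a = (if a \<ge> 0 then (suc_pos n ^^ nat a) x else (pred_pos n ^^ nat (- a)) x)"

definition unshift :: "nat \<Rightarrow> nat \<Rightarrow> nat \<Rightarrow> nat" where
  "unshift n y b = (pred_pos n ^^ b) y"

datatype 'a upred = Q 'a | Min | Max

datatype var = VX | VY

definition upred_holds :: "'a list \<Rightarrow> 'a upred \<Rightarrow> nat \<Rightarrow> bool" where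
  "upred_holds w U i = (case U of
       Q s \<Rightarrow> w ! (i - 1) = s
     | Min \<Rightarrow> i = 1
     | Max \<Rightarrow> i = length w)"

text \<open>Relation symbols are natural numbers (a formula only mentions finitely many).
  Body atoms:
  ULit pol U v a  : U(v+a) if pol, \<not>U(v+a) otherwise;
  EqXY            : x = y;
  LtXY            : x < y;
  RLit S a b      : S(x+a, y-b) \<and> x+a \<le> y-b  (a, b \<ge> 0).\<close>
datatype 'a lit =
    ULit bool "'a upred" var int
  | EqXY
  | LtXY
  | RLit nat nat nat

datatype head = HRel nat | HBot

text \<open>A Horn clause  x \<le> y \<and> \<delta>1 \<and> ... \<and> \<delta>r \<rightarrow> \<delta>0 ; the premise x \<le> y is implicit.
  A head HRel R stands for R(x,y).\<close>
type_synonym 'a clause = "'a lit list \<times> head"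

text \<open>An inclusion Horn formula  \<exists>R \<forall>x \<forall>y \<psi>(x,y), \<psi> the conjunction of the clauses.\<close>
type_synonym 'a ihorn = "'a clause list"

definition varval :: "var \<Rightarrow> nat \<Rightarrow> nat \<Rightarrow> nat" where
  "varval v x y = (case v of VX \<Rightarrow> x | VY \<Rightarrow> y)"

fun lit_holds :: "'a list \<Rightarrow> (nat \<Rightarrow> nat \<Rightarrow> nat \<Rightarrow> bool) \<Rightarrow> nat \<Rightarrow> nat \<Rightarrow> 'a lit \<Rightarrow> bool" where
  "lit_holds w I x y (ULit pol U v a) =
     (upred_holds w U (shift (length w) (varval v x y) a) = pol)"
| "lit_holds w I x y EqXY = (x = y)"
| "lit_holds w I x y LtXY = (x < y)"
| "lit_holds w I x y (RLit S a b) =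
     (I S (shift (length w) x (int a)) (unshift (length w) y b) \<and>
      shift (length w) x (int a) \<le> unshift (length w) y b)"

fun head_holds :: "(nat \<Rightarrow> nat \<Rightarrow> nat \<Rightarrow> bool) \<Rightarrow> nat \<Rightarrow> nat \<Rightarrow> head \<Rightarrow> bool" where
  "head_holds I x y (HRel R) = I R x y"
| "head_holds I x y HBot = False"

definition clause_holds :: "'a list \<Rightarrow> (nat \<Rightarrow> nat \<Rightarrow> nat \<Rightarrow> bool) \<Rightarrow> nat \<Rightarrow> nat \<Rightarrow> 'a clause \<Rightarrow> bool" where
  "clause_holds w I x y c =
     (x \<le> y \<and> (\<forall>l\<in>set (fst c). lit_holds w I x y l) \<longrightarrow> head_holds I x y (snd c))"

text \<open>Values of I outside [1,n] are irrelevant since all arguments lie in [1,n].\<close>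
definition ihorn_models :: "'a list \<Rightarrow> 'a ihorn \<Rightarrow> bool" where
  "ihorn_models w \<Phi> =
     (\<exists>I. \<forall>x\<in>{1..length w}. \<forall>y\<in>{1..length w}. \<forall>c\<in>set \<Phi>. clause_holds w I x y c)"

definition incl_ESO_HORN :: "'a list set set" where
  "incl_ESO_HORN = {L. \<exists>\<Phi>. L = {w. w \<noteq> [] \<and> ihorn_models w \<Phi>}}"

text \<open>Conjunct: either a terminal word u, or u B v with B a nonterminal.\<close>
datatype ('a, 'n) conjunct = CTerm "'a list" | CNT "'a list" 'n "'a list"

text \<open>Rule A \<rightarrow> \<alpha>1 & ... & \<alpha>k  (k \<ge> 1).\<close>
type_synonym ('a, 'n) lrule = "'n \<times> ('a, 'n) conjunct list"

text \<open>Least solution of the language equations, given inductively.\<close>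
inductive lc_gen :: "('a, 'n) lrule list \<Rightarrow> 'n \<Rightarrow> 'a list \<Rightarrow> bool" for P where
  "(A, cs) \<in> set P \<Longrightarrow> cs \<noteq> [] \<Longrightarrow>
   \<forall>c\<in>set cs. (\<exists>u. c = CTerm u \<and> w = u) \<or>
               (\<exists>u B v w'. c = CNT u B v \<and> w = u @ w' @ v \<and> lc_gen P B w')
   \<Longrightarrow> lc_gen P A w"

text \<open>Nonterminals are natural numbers (a grammar only uses finitely many).
  Each rule must have k \<ge> 1 conjuncts; rules with k = 0 are ignored by lc_gen anyway.\<close>
definition LinConj :: "'a list set set" where
  "LinConj = {L. \<exists>(P :: ('a, nat) lrule list) S. L = {w. lc_gen P S w}}"

end

theory Submission
  imports Defs "HOL-Library.Countable"
begin


lemma suc_iter: "x \<le> n \<Longrightarrow> (suc_pos n ^^ k) x = min (x + k) n"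
  by (induction k) (auto simp: suc_pos_def)

lemma pred_iter: "1 \<le> x \<Longrightarrow> (pred_pos n ^^ k) x = max (x - k) 1"
  by (induction k) (auto simp: pred_pos_def)

lemma shift_eq: "1 \<le> x \<Longrightarrow> x \<le> n \<Longrightarrow>
   int (shift n x a) = max 1 (min (int n) (int x + a))"
  by (auto simp: shift_def suc_iter pred_iter)

lemma unshift_eq: "1 \<le> y \<Longrightarrow> unshift n y b = max (y - b) 1"
  by (simp add: unshift_def pred_iter)



lemma pos_window_shift:
  assumes "w = p @ v @ s" "length p < t" "t \<le> length p + length v"
    "p = [] \<or> length p + K + 2 \<le> t" "s = [] \<or> t + K + 1 \<le> length p + length v"
    "\<bar>a\<bar> \<le> int K"
  shows "shift (length w) t a = length p + shift (length v) (t - length p) a"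
proof -
  have "int (shift (length w) t a) = max 1 (min (int (length w)) (int t + a))"
    using assms by (intro shift_eq) auto
  moreover have "int (shift (length v) (t - length p) a) = max 1 (min (int (length v)) (int (t - length p) + a))"
    using assms by (intro shift_eq) auto
  ultimately show ?thesis using assms(2-6) unfolding assms(1) by auto
qed

lemma pos_window:
  assumes "w = p @ v @ s" "length p < t" "t \<le> length p + length v"
    "p = [] \<or> length p + K + 2 \<le> t" "s = [] \<or> t + K + 1 \<le> length p + length v"
    "\<bar>a\<bar> \<le> int K"
  shows "upred_holds w U (shift (length w) t a) = upred_holds v U (shift (length v) (t - length p) a)"
proof -
  have e: "shift (length w) t a = length p + shift (length v) (t - length p) a"
    by (rule pos_window_shift[OF assms])
  have i: "int (shift (length v) (t - length p) a) = max 1 (min (int (length v)) (int (t - length p) + a))"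
    using assms by (intro shift_eq) auto
  define P where "P = shift (length v) (t - length p) a"
  have P1: "1 \<le> P" "P \<le> length v" using i assms unfolding P_def by auto
  have Pmin: "p \<noteq> [] \<Longrightarrow> P \<ge> 2" using i assms unfolding P_def by auto
  have Pmax: "s \<noteq> [] \<Longrightarrow> P < length v" using i assms unfolding P_def by auto
  show ?thesis
  proof (cases U)
    case (Q x)
    have "length p + P - 1 = length p + (P - 1)" using P1 by simp
    then have "w ! (length p + P - 1) = (v @ s) ! (P - 1)" unfolding assms(1)
      by (simp only: nth_append_length_plus)
    also have "\<dots> = v ! (P - 1)" using P1 by (intro nth_append_left) linarith
    finally have "w ! (length p + P - 1) = v ! (P - 1)" .
    then show ?thesis using Q e unfolding P_def[symmetric] upred_holds_def by simp
  next
    case Min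
    then show ?thesis using e P1 Pmin unfolding P_def[symmetric] upred_holds_def
      by (cases "p = []") auto
  next
    case Max
    then show ?thesis using e P1 Pmax unfolding P_def[symmetric] upred_holds_def assms(1)
      by (cases "s = []") auto
  qed
qed



fun litb :: "'a lit \<Rightarrow> nat" where
  "litb (ULit pol U v a) = nat \<bar>a\<bar>"
| "litb (RLit S a b) = max a b"
| "litb EqXY = 0"
| "litb LtXY = 0"

definition bnd :: "'a ihorn \<Rightarrow> nat" where
  "bnd \<Phi> = Lattices_Big.Max (insert 0 (litb ` (\<Union>c\<in>set \<Phi>. set (fst c))))"

lemma bnd_ge: "(body, h) \<in> set \<Phi> \<Longrightarrow> l \<in> set body \<Longrightarrow> litb l \<le> bnd \<Phi>"
  unfolding bnd_def by (rule Max_ge) force+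

inductive der :: "'a list \<Rightarrow> 'a ihorn \<Rightarrow> head \<Rightarrow> nat \<Rightarrow> nat \<Rightarrow> bool" for w \<Phi> where
  derI: "(body, h) \<in> set \<Phi> \<Longrightarrow> 1 \<le> x \<Longrightarrow> x \<le> y \<Longrightarrow> y \<le> length w \<Longrightarrow>
   (\<forall>l\<in>set body. lit_holds w (\<lambda>_ _ _. True) x y l) \<Longrightarrow>
   (\<forall>S a b. RLit S a b \<in> set body \<longrightarrow> der w \<Phi> (HRel S) (shift (length w) x (int a)) (unshift (length w) y b))
   \<Longrightarrow> der w \<Phi> h x y"

lemma lit_holds_I: "lit_holds w I x y l \<longleftrightarrow> lit_holds w (\<lambda>_ _ _. True) x y l \<and>
   (\<forall>S a b. l = RLit S a b \<longrightarrow> I S (shift (length w) x (int a)) (unshift (length w) y b))"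
  by (cases l) auto

lemma models_iff: "ihorn_models w \<Phi> \<longleftrightarrow> \<not> (\<exists>x y. der w \<Phi> HBot x y)"
proof
  assume "ihorn_models w \<Phi>"
  then obtain I where I: "\<forall>x\<in>{1..length w}. \<forall>y\<in>{1..length w}. \<forall>c\<in>set \<Phi>. clause_holds w I x y c"
    unfolding ihorn_models_def by blast
  have "der w \<Phi> h x y \<Longrightarrow> head_holds I x y h" for h x y
  proof (induction rule: der.induct)
    case (derI body h x y)
    have "lit_holds w I x y l" if "l \<in> set body" for l
    proof (rule lit_holds_I[THEN iffD2], intro conjI allI impI)
      show "lit_holds w (\<lambda>_ _ _. True) x y l" using derI.hyps(5) that by blast
    next
      fix S a b assume "l = RLit S a b"
      then have "RLit S a b \<in> set body" using that by simp
      then show "I S (shift (length w) x (int a)) (unshift (length w) y b)"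
        using derI.IH by simp
    qed
    then have "\<forall>l\<in>set body. lit_holds w I x y l" by blast
    moreover have "x \<in> {1..length w}" "y \<in> {1..length w}" using derI.hyps(2-4) by auto
    then have "clause_holds w I x y (body, h)" using I derI.hyps(1) by blast
    ultimately show ?case using derI.hyps(3) unfolding clause_holds_def by simp
  qed
  then show "\<not> (\<exists>x y. der w \<Phi> HBot x y)" by fastforce
next
  assume nb: "\<not> (\<exists>x y. der w \<Phi> HBot x y)"
  define I where "I = (\<lambda>S. der w \<Phi> (HRel S))"
  have "clause_holds w I x y c" if "x \<in> {1..length w}" "y \<in> {1..length w}" "c \<in> set \<Phi>" for x y c
  proof (cases c)
    case (Pair body h)
    show ?thesis unfolding clause_holds_def
    proof
      assume a: "x \<le> y \<and> (\<forall>l\<in>set (fst c). lit_holds w I x y l)"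
      have al: "\<forall>l\<in>set body. lit_holds w I x y l" using a Pair by simp
      have "der w \<Phi> h x y"
      proof (rule derI[of body])
        show "\<forall>l\<in>set body. lit_holds w (\<lambda>_ _ _. True) x y l"
        proof
          fix l assume "l \<in> set body"
          then have "lit_holds w I x y l" using al by blast
          then show "lit_holds w (\<lambda>_ _ _. True) x y l" by (cases l) auto
        qed
        show "\<forall>S a b. RLit S a b \<in> set body \<longrightarrow> der w \<Phi> (HRel S) (shift (length w) x (int a)) (unshift (length w) y b)"
        proof (intro allI impI)
          fix S a b assume "RLit S a b \<in> set body"
          then have "lit_holds w I x y (RLit S a b)" using al by blast
          then show "der w \<Phi> (HRel S) (shift (length w) x (int a)) (unshift (length w) y b)"
            unfolding I_def by simp
        qed
      next
        show "(body, h) \<in> set \<Phi>" using that Pair by simp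
        show "1 \<le> x" "x \<le> y" "y \<le> length w" using that a by auto
      qed
      then show "head_holds I x y (snd c)" using nb Pair unfolding I_def by (cases h) auto
    qed
  qed
  then show "ihorn_models w \<Phi>" unfolding ihorn_models_def by blast
qed



definition lastn :: "nat \<Rightarrow> 'a list \<Rightarrow> 'a list" where
  "lastn k xs = drop (length xs - k) xs"

lemma length_lastn: "length (lastn k xs) = min k (length xs)"
  by (simp add: lastn_def)

lemma lastn_append: "lastn k (p @ z) = lastn k (lastn k p @ z)"
  unfolding lastn_def
  by (cases "k \<le> length z"; cases "k \<le> length p") (auto simp: min_def intro!: arg_cong[where f="\<lambda>n. drop n p"])

lemma take_append_take: "take k (z @ s) = take k (z @ take k s)"
  by simp

lemma step1:
  assumes w: "w = p @ u @ s" and lam: "lam = lastn (Suc K) p" and rho: "rho = take (Suc K) s"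
    and lw: "lw = lam @ u @ rho" and d: "d = length p - length lam"
    and t: "length p + 1 \<le> t" "t \<le> length p + length u" and a: "\<bar>a\<bar> \<le> int K"
  shows "shift (length w) t a = d + shift (length lw) (t - d) a"
    "upred_holds w U (shift (length w) t a) = upred_holds lw U (shift (length lw) (t - d) a)"
proof -
  have ll: "length lam = min (Suc K) (length p)" using lam by (simp add: length_lastn)
  have lr: "length rho = min (Suc K) (length s)" using rho by simp
  have pd: "p = take d p @ lam" using lam d ll unfolding lastn_def by simp
  have sd: "s = rho @ drop (Suc K) s" using rho by simp
  have W: "w = take d p @ lw @ drop (Suc K) s" using w lw pd sd by (metis append.assoc)
  have ltd: "length (take d p) = d" using d by simp
  have m1: "take d p = [] \<or> length (take d p) + K + 2 \<le> t"
    using ll d t by (cases "length p \<le> Suc K") auto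
  have m2: "drop (Suc K) s = [] \<or> t + K + 1 \<le> length (take d p) + length lw"
    using ll lr d t lw by (cases "length s \<le> Suc K") auto
  have tt: "length (take d p) < t" "t \<le> length (take d p) + length lw" using t ltd d ll lw by auto
  show "shift (length w) t a = d + shift (length lw) (t - d) a"
    using pos_window_shift[OF W tt m1 m2 a] ltd by simp
  show "upred_holds w U (shift (length w) t a) = upred_holds lw U (shift (length lw) (t - d) a)"
    using pos_window[OF W tt m1 m2 a] ltd by simp
qed

lemma step1_unshift:
  assumes w: "w = p @ u @ s" and lam: "lam = lastn (Suc K) p" 
    and d: "d = length p - length lam" and u: "u \<noteq> []" and b: "b \<le> K"
  shows "unshift (length w) (length p + length u) b = d + unshift n (length p + length u - d) b"
proof -
  have ll: "length lam = min (Suc K) (length p)" using lam by (simp add: length_lastn)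
  have 1: "unshift (length w) (length p + length u) b = max (length p + length u - b) 1"
    using u by (intro unshift_eq) (simp add: Suc_le_eq)
  have 2: "unshift n (length p + length u - d) b = max (length p + length u - d - b) 1"
    using u ll d by (intro unshift_eq) (auto simp: Suc_le_eq)
  show ?thesis unfolding 1 2 using u ll d b by (auto simp: max_def)
qed



abbreviation TT :: "nat \<Rightarrow> nat \<Rightarrow> nat \<Rightarrow> bool" where "TT \<equiv> (\<lambda>_ _ _. True)"

lemma lit_step1:
  assumes w: "w = p @ u @ s" and lam: "lam = lastn (Suc K) p" and rho: "rho = take (Suc K) s"
    and lw: "lw = lam @ u @ rho" and u: "u \<noteq> []" and l: "litb l \<le> K"
  shows "lit_holds w TT (length p + 1) (length p + length u) l \<longleftrightarrow>
         lit_holds lw TT (length lam + 1) (length lam + length u) l"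
proof -
  define d where "d = length p - length lam"
  have ll: "length lam = min (Suc K) (length p)" using lam by (simp add: length_lastn)
  have x: "length p + 1 - d = length lam + 1" and y: "length p + length u - d = length lam + length u"
    using ll d_def by auto
  have u1: "1 \<le> length u" using u by (simp add: Suc_le_eq)
  show ?thesis
  proof (cases l)
    case (ULit pol U v a)
    have a: "\<bar>a\<bar> \<le> int K" using l ULit by simp
    show ?thesis
    proof (cases v)
      case VX
      show ?thesis using step1(2)[OF w lam rho lw d_def _ _ a, of "length p + 1" U] u1 ULit VX x
        by (simp add: varval_def)
    next
      case VY
      show ?thesis using step1(2)[OF w lam rho lw d_def _ _ a, of "length p + length u" U] u1 ULit VY y
        by (simp add: varval_def)
    qed
  next
    case (RLit S a b)
    have a: "\<bar>int a\<bar> \<le> int K" and b: "b \<le> K" using l RLit by auto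
    have 1: "shift (length w) (length p + 1) (int a) = d + shift (length lw) (length lam + 1) (int a)"
      using step1(1)[OF w lam rho lw d_def _ _ a, of "length p + 1"] u1 x by simp
    have 2: "unshift (length w) (length p + length u) b = d + unshift (length lw) (length lam + length u) b"
      using step1_unshift[OF w lam d_def u b, of "length lw"] y by simp
    show ?thesis using RLit 1 2 by simp
  qed auto
qed



lemma long_left:
  assumes lw: "lw = lam @ u @ rho" and u: "2 * Suc K + 2 \<le> length u" and a: "\<bar>a\<bar> \<le> int K"
  shows "upred_holds lw U (shift (length lw) (length lam + 1) a) =
         upred_holds (lam @ take (Suc (Suc K)) u) U (shift (length lam + Suc (Suc K)) (length lam + 1) a)"
proof -
  have W: "lw = [] @ (lam @ take (Suc (Suc K)) u) @ (drop (Suc (Suc K)) u @ rho)" using lw by simp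
  have "upred_holds lw U (shift (length lw) (length lam + 1) a) =
     upred_holds (lam @ take (Suc (Suc K)) u) U (shift (length (lam @ take (Suc (Suc K)) u)) (length lam + 1 - length ([]::'a list)) a)"
    by (rule pos_window[OF W _ _ _ _ a]) (use u in auto)
  then show ?thesis using u by (simp add: min_def)
qed

lemma long_right:
  assumes lw: "lw = lam @ u @ rho" and u: "2 * Suc K + 2 \<le> length u" and a: "\<bar>a\<bar> \<le> int K"
  shows "upred_holds lw U (shift (length lw) (length lam + length u) a) =
         upred_holds (drop (length u - Suc (Suc K)) u @ rho) U (shift (Suc (Suc K) + length rho) (Suc (Suc K)) a)"
proof -
  have W: "lw = (lam @ take (length u - Suc (Suc K)) u) @ (drop (length u - Suc (Suc K)) u @ rho) @ []"
    using lw by simp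
  have "upred_holds lw U (shift (length lw) (length lam + length u) a) =
     upred_holds (drop (length u - Suc (Suc K)) u @ rho) U (shift (length (drop (length u - Suc (Suc K)) u @ rho)) (length lam + length u - length (lam @ take (length u - Suc (Suc K)) u)) a)"
    by (rule pos_window[OF W _ _ _ _ a]) (use u in auto)
  moreover have "length lam + length u - length (lam @ take (length u - Suc (Suc K)) u) = Suc (Suc K)"
    using u by simp
  moreover have "length (drop (length u - Suc (Suc K)) u @ rho) = Suc (Suc K) + length rho"
    using u by simp
  ultimately show ?thesis by (simp only:)
qed

lemma long_shift:
  assumes lw: "lw = lam @ u @ rho" and u: "2 * Suc K + 2 \<le> length u" and a: "a \<le> K"
  shows "shift (length lw) (length lam + 1) (int a) = length lam + 1 + a"
proof -
  have "int (shift (length lw) (length lam + 1) (int a)) = max 1 (min (int (length lw)) (int (length lam + 1) + int a))"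
    using lw u by (intro shift_eq) auto
  then show ?thesis using lw u a by auto
qed

lemma long_unshift:
  assumes u: "2 * Suc K + 2 \<le> length u" and b: "b \<le> K"
  shows "unshift n (length lam + length u) b = length lam + length u - b"
proof -
  have "unshift n (length lam + length u) b = max (length lam + length u - b) 1"
    using u by (intro unshift_eq) auto
  then show ?thesis using u b by auto
qed

lemma lit_step2:
  assumes lw: "lw = lam @ u @ rho" and lw0: "lw0 = lam @ u0 @ rho"
    and u: "2 * Suc K + 2 \<le> length u" and u0: "length u0 = 2 * Suc K + 2"
    and tk: "take (Suc (Suc K)) u0 = take (Suc (Suc K)) u"
    and dr: "drop (Suc (Suc K)) u0 = drop (length u - Suc (Suc K)) u"
    and l: "litb l \<le> K"
  shows "lit_holds lw TT (length lam + 1) (length lam + length u) l \<longleftrightarrow>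
         lit_holds lw0 TT (length lam + 1) (length lam + length u0) l"
proof (cases l)
  case (ULit pol U v a)
  have a: "\<bar>a\<bar> \<le> int K" using l ULit by simp
  have dr': "drop (length u0 - Suc (Suc K)) u0 = drop (length u - Suc (Suc K)) u"
    using dr u0 by simp
  show ?thesis
  proof (cases v)
    case VX
    then show ?thesis using ULit long_left[OF lw u a, of U] long_left[OF lw0 _ a, of U] u0 tk
      by (simp add: varval_def)
  next
    case VY
    then show ?thesis using ULit long_right[OF lw u a, of U] long_right[OF lw0 _ a, of U] u0 dr'
      by (simp add: varval_def)
  qed
next
  case (RLit S a b)
  have a: "a \<le> K" and b: "b \<le> K" using l RLit by auto
  have 1: "unshift (length lw) (length lam + length u) b = length lam + length u - b"
    by (rule long_unshift[OF u b])
  have 2: "unshift (length lw0) (length lam + length u0) b = length lam + length u0 - b"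
    by (rule long_unshift) (use u0 b in auto)
  have 3: "shift (length lw) (length lam + 1) (int a) = length lam + 1 + a"
    by (rule long_shift[OF lw u a])
  have 4: "shift (length lw0) (length lam + 1) (int a) = length lam + 1 + a"
    by (rule long_shift[OF lw0 _ a]) (use u0 in auto)
  have 5: "length lam + 1 + a \<le> length lam + length u - b" using u a b by arith
  have 6: "length lam + 1 + a \<le> length lam + length u0 - b" using u0 a b by arith
  show ?thesis unfolding RLit lit_holds.simps 1 2 3 4 using 5 6 by blast
qed (use u u0 in auto)



datatype 'a nt = NAll | NN head "'a list" "'a list" | NR "'a list" "'a list" | NL "'a list" "'a list" | NS

definition iu1 :: "'a list \<Rightarrow> 'a list \<Rightarrow> 'a list \<Rightarrow> nat \<Rightarrow> 'a list" where
  "iu1 lam u0 rho a = take (shift (length (lam @ u0 @ rho)) (length lam + 1) (int a) - (length lam + 1)) u0"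

definition iu2 :: "'a list \<Rightarrow> 'a list \<Rightarrow> 'a list \<Rightarrow> nat \<Rightarrow> 'a list" where
  "iu2 lam u0 rho b = drop (unshift (length (lam @ u0 @ rho)) (length lam + length u0) b - length lam) u0"

definition innerc :: "nat \<Rightarrow> 'a list \<Rightarrow> 'a list \<Rightarrow> 'a list \<Rightarrow> 'a lit \<Rightarrow> ('a, 'a nt) conjunct list" where
  "innerc K lam u0 rho l = (case l of RLit S a b \<Rightarrow>
     [CNT (iu1 lam u0 rho a)
          (NN (HRel S) (lastn (Suc K) (lam @ iu1 lam u0 rho a)) (take (Suc K) (iu2 lam u0 rho b @ rho)))
          (iu2 lam u0 rho b)]
   | _ \<Rightarrow> [])"

lemma inner_geom:
  assumes w: "w = p @ u @ s" and lam: "lam = lastn (Suc K) p" and rho: "rho = take (Suc K) s"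
    and u: "u \<noteq> []"
    and u0: "u0 = u \<or> (2 * Suc K + 2 \<le> length u \<and> length u0 = 2 * Suc K + 2 \<and>
        take (Suc (Suc K)) u0 = take (Suc (Suc K)) u \<and> drop (Suc (Suc K)) u0 = drop (length u - Suc (Suc K)) u)"
    and ok: "lit_holds (lam @ u0 @ rho) TT (length lam + 1) (length lam + length u0) (RLit S a b)"
    and a: "a \<le> K" and b: "b \<le> K"
    and u1': "u1 = iu1 lam u0 rho a"
    and u2': "u2 = iu2 lam u0 rho b"
  shows "shift (length w) (length p + 1) (int a) = length p + length u1 + 1"
    "unshift (length w) (length p + length u) b + length u2 = length p + length u"
    "length u1 + length u2 < length u"
    "take (length u1) u = u1" "drop (length u - length u2) u = u2"
proof -
  have u1: "u1 = take (shift (length (lam @ u0 @ rho)) (length lam + 1) (int a) - (length lam + 1)) u0"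
    using u1' unfolding iu1_def .
  have u2: "u2 = drop (unshift (length (lam @ u0 @ rho)) (length lam + length u0) b - length lam) u0"
    using u2' unfolding iu2_def .
  define d where "d = length p - length lam"
  have ll: "length lam = min (Suc K) (length p)" using lam by (simp add: length_lastn)
  have u1': "1 \<le> length u" using u by (simp add: Suc_le_eq)
  have sw: "shift (length w) (length p + 1) (int a) = d + shift (length (lam @ u @ rho)) (length lam + 1) (int a)"
    using step1(1)[OF w lam rho refl d_def, of "length p + 1" "int a"] u1' a ll d_def by simp
  have uw: "unshift (length w) (length p + length u) b = d + unshift (length (lam @ u @ rho)) (length lam + length u) b"
  proof -
    have e: "length p + length u - d = length lam + length u" using ll d_def by simp
    show ?thesis using step1_unshift[OF w lam d_def u b, of "length (lam @ u @ rho)"] unfolding e .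
  qed
  have "(shift (length w) (length p + 1) (int a) = length p + length u1 + 1 \<and>
    unshift (length w) (length p + length u) b + length u2 = length p + length u \<and>
    length u1 + length u2 < length u \<and>
    take (length u1) u = u1 \<and> drop (length u - length u2) u = u2)"
    using u0
  proof
    assume e: "u0 = u"
    define X' where "X' = shift (length (lam @ u @ rho)) (length lam + 1) (int a)"
    define Y' where "Y' = unshift (length (lam @ u @ rho)) (length lam + length u) b"
    have X'le: "X' \<le> Y'" using ok e unfolding X'_def Y'_def by simp
    have "int X' = max 1 (min (int (length (lam @ u @ rho))) (int (length lam + 1) + int a))"
      unfolding X'_def by (rule shift_eq) (use u1' in auto)
    then have X'ge: "length lam + 1 \<le> X'" using u1' by auto
    have "Y' = max (length lam + length u - b) 1" unfolding Y'_def by (rule unshift_eq) (use u1' in auto)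
    then have Y'le: "Y' \<le> length lam + length u" using u1' by auto
    have lu1: "length u1 = X' - (length lam + 1)" using u1 e X'le Y'le X'ge unfolding X'_def by simp
    have lu2: "length u2 = length u - (Y' - length lam)" using u2 e unfolding Y'_def by simp
    have sw': "shift (length w) (length p + 1) (int a) = d + X'" using sw unfolding X'_def by simp
    have uw': "unshift (length w) (length p + length u) b = d + Y'" using uw unfolding Y'_def by simp
    have lp: "length lam \<le> length p" "d = length p - length lam" using ll d_def by auto
    show ?thesis
    proof (intro conjI)
      show "shift (length w) (length p + 1) (int a) = length p + length u1 + 1"
        using sw' lu1 X'ge lp by linarith
      show "unshift (length w) (length p + length u) b + length u2 = length p + length u"
        using uw' lu2 X'le X'ge Y'le lp by linarith
      show "length u1 + length u2 < length u" using lu1 lu2 X'le X'ge Y'le by linarith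
      show "take (length u1) u = u1" using u1 e lu1 unfolding X'_def by simp
      show "drop (length u - length u2) u = u2"
      proof -
        have "length u - length u2 = Y' - length lam" using lu2 X'le X'ge Y'le by linarith
        then show ?thesis using u2 e unfolding Y'_def by simp
      qed
    qed
  next
    assume L: "2 * Suc K + 2 \<le> length u \<and> length u0 = 2 * Suc K + 2 \<and>
        take (Suc (Suc K)) u0 = take (Suc (Suc K)) u \<and> drop (Suc (Suc K)) u0 = drop (length u - Suc (Suc K)) u"
    have X0: "shift (length (lam @ u0 @ rho)) (length lam + 1) (int a) = length lam + 1 + a"
      by (rule long_shift[OF refl _ a]) (use L in auto)
    have Y0: "unshift (length (lam @ u0 @ rho)) (length lam + length u0) b = length lam + length u0 - b"
      by (rule long_unshift[OF _ b]) (use L in auto)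
    have X: "shift (length (lam @ u @ rho)) (length lam + 1) (int a) = length lam + 1 + a"
      by (rule long_shift[OF refl _ a]) (use L in auto)
    have Y: "unshift (length (lam @ u @ rho)) (length lam + length u) b = length lam + length u - b"
      by (rule long_unshift[OF _ b]) (use L in auto)
    have U1: "u1 = take a u0" using u1 X0 by simp
    have e2: "unshift (length (lam @ u0 @ rho)) (length lam + length u0) b - length lam = length u0 - b"
      unfolding Y0 by simp
    have U2: "u2 = drop (length u0 - b) u0" using u2 unfolding e2 .
    have lu1: "length u1 = a" using U1 L a by simp
    have lu2: "length u2 = b" using U2 L b by simp
    have tk: "take a u0 = take a u"
    proof -
      have "take a u0 = take a (take (Suc (Suc K)) u0)" using a by simp
      also have "\<dots> = take a (take (Suc (Suc K)) u)" using L by simp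
      also have "\<dots> = take a u" using a by simp
      finally show ?thesis .
    qed
    have dr: "drop (length u0 - b) u0 = drop (length u - b) u"
    proof -
      have Lu: "2 * Suc K + 2 \<le> length u" "length u0 = 2 * Suc K + 2" using L by blast+
      have n1: "length u0 - b = (Suc (Suc K) - b) + Suc (Suc K)" using Lu b by arith
      have n2: "length u - b = (Suc (Suc K) - b) + (length u - Suc (Suc K))" using Lu b by arith
      have "drop (length u0 - b) u0 = drop (Suc (Suc K) - b) (drop (Suc (Suc K)) u0)"
        unfolding n1 by (simp only: drop_drop)
      also have "\<dots> = drop (Suc (Suc K) - b) (drop (length u - Suc (Suc K)) u)" using L by simp
      also have "\<dots> = drop (length u - b) u" unfolding n2 by (simp only: drop_drop)
      finally show ?thesis .
    qed
    show ?thesis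
    proof (intro conjI)
      show "shift (length w) (length p + 1) (int a) = length p + length u1 + 1"
        using sw X lu1 ll d_def by simp
      show "unshift (length w) (length p + length u) b + length u2 = length p + length u"
        using uw Y lu2 ll d_def L b by simp
      show "length u1 + length u2 < length u" using lu1 lu2 L a b by simp
      show "take (length u1) u = u1" using U1 lu1 tk by simp
      show "drop (length u - length u2) u = u2" using U2 lu2 dr by simp
    qed
  qed
  then show "shift (length w) (length p + 1) (int a) = length p + length u1 + 1"
    "unshift (length w) (length p + length u) b + length u2 = length p + length u"
    "length u1 + length u2 < length u"
    "take (length u1) u = u1" "drop (length u - length u2) u = u2" by auto
qed



definition letters :: "'a::finite list" where "letters = (SOME xs. set xs = UNIV)"

lemma set_letters: "set (letters::'a::finite list) = UNIV"
proof -
  have "\<exists>xs::'a list. set xs = UNIV" using finite_list[OF finite_UNIV] by blast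
  then show ?thesis unfolding letters_def by (rule someI_ex)
qed

definition ctxs :: "nat \<Rightarrow> 'a::finite list list" where
  "ctxs K = concat (map (\<lambda>i. List.n_lists i letters) [0..<Suc (Suc K)])"

definition cores :: "nat \<Rightarrow> 'a::finite list list" where
  "cores K = concat (map (\<lambda>i. List.n_lists i letters) [1..<2 * Suc K + 3])"

lemma set_nl: "set (List.n_lists i (letters::'a::finite list)) = {ys. length ys = i}"
  by (simp add: set_n_lists set_letters)

lemma set_ctxs: "set (ctxs K) = {xs. length xs \<le> Suc K}"
  unfolding ctxs_def set_concat set_map image_image set_nl by (auto simp: less_Suc_eq_le)

lemma set_cores: "set (cores K) = {xs. 1 \<le> length xs \<and> length xs \<le> 2 * Suc K + 2}"
  unfolding cores_def set_concat set_map image_image set_nl by auto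

definition okb :: "'a list \<Rightarrow> 'a list \<Rightarrow> 'a list \<Rightarrow> 'a lit list \<Rightarrow> bool" where
  "okb lam u0 rho body = (\<forall>l\<in>set body. lit_holds (lam @ u0 @ rho) TT (length lam + 1) (length lam + length u0) l)"

definition conjs :: "nat \<Rightarrow> 'a list \<Rightarrow> 'a list \<Rightarrow> 'a list \<Rightarrow> 'a lit list \<Rightarrow> ('a, 'a nt) conjunct list" where
  "conjs K lam u0 rho body = concat (map (innerc K lam u0 rho) body)"

definition nnr :: "nat \<Rightarrow> 'a::finite ihorn \<Rightarrow> ('a, 'a nt) lrule list" where
  "nnr K \<Phi> = [(NN h lam rho, cs). (body, h) \<leftarrow> \<Phi>, lam \<leftarrow> ctxs K, rho \<leftarrow> ctxs K, u0 \<leftarrow> cores K,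
     okb lam u0 rho body,
     cs \<leftarrow> (CTerm u0 # conjs K lam u0 rho body) #
       (if length u0 = 2 * Suc K + 2
        then [CNT (take (Suc (Suc K)) u0) NAll (drop (Suc (Suc K)) u0) # conjs K lam u0 rho body] else [])]"

definition allr :: "('a::finite, 'a nt) lrule list" where
  "allr = (NAll, [CTerm []]) # [(NAll, [CNT [a] NAll []]). a \<leftarrow> letters]"

definition topr :: "nat \<Rightarrow> ('a::finite, 'a nt) lrule list" where
  "topr K = [r. lam \<leftarrow> ctxs K, rho \<leftarrow> ctxs K,
     r \<leftarrow> [(NR lam rho, [CNT [] (NN HBot lam rho) rho]), (NL lam rho, [CNT lam (NR lam rho) []]),
           (NS, [CNT [] (NL lam rho) []])]
        @ (if length rho = Suc K then [(NR lam rho, [CNT [] (NR lam rho) [a]]). a \<leftarrow> letters] else [])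
        @ (if length lam = Suc K then [(NL lam rho, [CNT [a] (NL lam rho) []]). a \<leftarrow> letters] else [])]"

definition gram :: "nat \<Rightarrow> 'a::finite ihorn \<Rightarrow> ('a, 'a nt) lrule list" where
  "gram K \<Phi> = allr @ topr K @ nnr K \<Phi>"

lemma nnr_D: "(A, cs) \<in> set (nnr K \<Phi>) \<Longrightarrow> (\<exists>body h lam rho u0. (body, h) \<in> set \<Phi> \<and>
   length lam \<le> Suc K \<and> length rho \<le> Suc K \<and> 1 \<le> length u0 \<and> length u0 \<le> 2 * Suc K + 2 \<and>
   okb lam u0 rho body \<and> A = NN h lam rho \<and>
   (cs = CTerm u0 # conjs K lam u0 rho body \<or>
    (length u0 = 2 * Suc K + 2 \<and> cs = CNT (take (Suc (Suc K)) u0) NAll (drop (Suc (Suc K)) u0) # conjs K lam u0 rho body)))"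
  unfolding nnr_def apply (auto simp: set_ctxs set_cores split: if_splits)
  by force

lemma nnr_I1: "(body, h) \<in> set \<Phi> \<Longrightarrow> length lam \<le> Suc K \<Longrightarrow> length rho \<le> Suc K \<Longrightarrow>
   1 \<le> length u0 \<Longrightarrow> length u0 \<le> 2 * Suc K + 2 \<Longrightarrow> okb lam u0 rho body \<Longrightarrow>
   (NN h lam rho, CTerm u0 # conjs K lam u0 rho body) \<in> set (nnr K \<Phi>)"
  unfolding nnr_def apply (simp add: set_ctxs set_cores)
  apply (rule bexI[of _ "(body, h)"]) apply simp apply (rule exI[of _ lam]) apply simp
  apply (rule exI[of _ rho]) apply simp apply (rule bexI[of _ u0]) by auto

lemma nnr_I2: "(body, h) \<in> set \<Phi> \<Longrightarrow> length lam \<le> Suc K \<Longrightarrow> length rho \<le> Suc K \<Longrightarrow>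
   length u0 = 2 * Suc K + 2 \<Longrightarrow> okb lam u0 rho body \<Longrightarrow>
   (NN h lam rho, CNT (take (Suc (Suc K)) u0) NAll (drop (Suc (Suc K)) u0) # conjs K lam u0 rho body) \<in> set (nnr K \<Phi>)"
  unfolding nnr_def apply (simp add: set_ctxs set_cores)
  apply (rule bexI[of _ "(body, h)"]) apply simp apply (rule exI[of _ lam]) apply simp
  apply (rule exI[of _ rho]) apply simp apply (rule bexI[of _ u0]) by auto

lemma allr_D: "(A, cs) \<in> set allr \<Longrightarrow> A = NAll \<and> (cs = [CTerm []] \<or> (\<exists>a. cs = [CNT [a] NAll []]))"
  unfolding allr_def by auto

lemma allr_I: "(NAll, [CTerm []]) \<in> set allr" "(NAll, [CNT [a] NAll []]) \<in> set allr"
  unfolding allr_def by (auto simp: set_letters)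

lemma topr_D: "(A, cs) \<in> set (topr K) \<Longrightarrow> (\<exists>lam rho. length lam \<le> Suc K \<and> length rho \<le> Suc K \<and>
   ((A = NR lam rho \<and> cs = [CNT [] (NN HBot lam rho) rho]) \<or>
    (A = NL lam rho \<and> cs = [CNT lam (NR lam rho) []]) \<or>
    (A = NS \<and> cs = [CNT [] (NL lam rho) []]) \<or>
    (length rho = Suc K \<and> A = NR lam rho \<and> (\<exists>a. cs = [CNT [] (NR lam rho) [a]])) \<or>
    (length lam = Suc K \<and> A = NL lam rho \<and> (\<exists>a. cs = [CNT [a] (NL lam rho) []]))))"
  unfolding topr_def by (auto simp: set_ctxs split: if_splits)

lemma topr_I:
  assumes "length lam \<le> Suc K" "length rho \<le> Suc K"
  shows "(NR lam rho, [CNT [] (NN HBot lam rho) rho]) \<in> set (topr K)"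
    "(NL lam rho, [CNT lam (NR lam rho) []]) \<in> set (topr K)"
    "(NS, [CNT [] (NL lam rho) []]) \<in> set (topr K)"
  unfolding topr_def using assms by (auto simp: set_ctxs set_letters intro!: bexI[of _ lam] bexI[of _ rho])

lemma topr_I2:
  assumes "length lam \<le> Suc K" "length rho = Suc K"
  shows "(NR lam rho, [CNT [] (NR lam rho) [a]]) \<in> set (topr K)"
  unfolding topr_def using assms apply (simp add: set_ctxs set_letters)
  apply (rule exI[of _ lam]) apply simp apply (rule exI[of _ rho]) by (simp add: image_iff)

lemma topr_I3:
  assumes "length lam = Suc K" "length rho \<le> Suc K"
  shows "(NL lam rho, [CNT [a] (NL lam rho) []]) \<in> set (topr K)"
  unfolding topr_def using assms apply (simp add: set_ctxs set_letters)
  apply (rule exI[of _ lam]) apply simp apply (rule exI[of _ rho]) by (simp add: image_iff)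




definition semNN :: "nat \<Rightarrow> 'a ihorn \<Rightarrow> head \<Rightarrow> 'a list \<Rightarrow> 'a list \<Rightarrow> 'a list \<Rightarrow> bool" where
  "semNN K \<Phi> h lam rho u = (u \<noteq> [] \<and> (\<forall>p s. lastn (Suc K) p = lam \<longrightarrow> take (Suc K) s = rho \<longrightarrow>
      der (p @ u @ s) \<Phi> h (length p + 1) (length p + length u)))"

fun sem :: "nat \<Rightarrow> 'a ihorn \<Rightarrow> 'a nt \<Rightarrow> 'a list \<Rightarrow> bool" where
  "sem K \<Phi> NAll w = True"
| "sem K \<Phi> (NN h lam rho) w = semNN K \<Phi> h lam rho w"
| "sem K \<Phi> (NR lam rho) w = (\<exists>u s. w = u @ s \<and> take (Suc K) s = rho \<and> semNN K \<Phi> HBot lam rho u)"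
| "sem K \<Phi> (NL lam rho) w = (\<exists>p u s. w = p @ u @ s \<and> lastn (Suc K) p = lam \<and> take (Suc K) s = rho \<and> semNN K \<Phi> HBot lam rho u)"
| "sem K \<Phi> NS w = (\<exists>x y. der w \<Phi> HBot x y)"

lemma lit_transfer:
  assumes w: "w = p @ u @ s" and lam: "lam = lastn (Suc K) p" and rho: "rho = take (Suc K) s"
    and u: "u \<noteq> []"
    and u0: "u0 = u \<or> (2 * Suc K + 2 \<le> length u \<and> length u0 = 2 * Suc K + 2 \<and>
        take (Suc (Suc K)) u0 = take (Suc (Suc K)) u \<and> drop (Suc (Suc K)) u0 = drop (length u - Suc (Suc K)) u)"
    and l: "litb l \<le> K"
  shows "lit_holds w TT (length p + 1) (length p + length u) l \<longleftrightarrow>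
         lit_holds (lam @ u0 @ rho) TT (length lam + 1) (length lam + length u0) l"
proof -
  have 1: "lit_holds w TT (length p + 1) (length p + length u) l \<longleftrightarrow>
         lit_holds (lam @ u @ rho) TT (length lam + 1) (length lam + length u) l"
    by (rule lit_step1[OF w lam rho refl u l])
  show ?thesis using u0
  proof
    assume "u0 = u" then show ?thesis using 1 by simp
  next
    assume L: "2 * Suc K + 2 \<le> length u \<and> length u0 = 2 * Suc K + 2 \<and>
        take (Suc (Suc K)) u0 = take (Suc (Suc K)) u \<and> drop (Suc (Suc K)) u0 = drop (length u - Suc (Suc K)) u"
    have 2: "lit_holds (lam @ u @ rho) TT (length lam + 1) (length lam + length u) l \<longleftrightarrow>
         lit_holds (lam @ u0 @ rho) TT (length lam + 1) (length lam + length u0) l"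
      by (rule lit_step2[OF refl refl]) (use L l in auto)
    show ?thesis using 1 2 by simp
  qed
qed

lemma sound_NN:
  assumes K: "K = bnd \<Phi>" and bh: "(body, h) \<in> set \<Phi>"
    and ok: "okb lam u0 rho body" and u0l: "1 \<le> length u0"
    and first: "u0 = u \<or> (2 * Suc K + 2 \<le> length u \<and> length u0 = 2 * Suc K + 2 \<and>
        take (Suc (Suc K)) u0 = take (Suc (Suc K)) u \<and> drop (Suc (Suc K)) u0 = drop (length u - Suc (Suc K)) u)"
    and inner: "\<And>S a b. RLit S a b \<in> set body \<Longrightarrow> \<exists>u'. u = iu1 lam u0 rho a @ u' @ iu2 lam u0 rho b \<and>
       semNN K \<Phi> (HRel S) (lastn (Suc K) (lam @ iu1 lam u0 rho a)) (take (Suc K) (iu2 lam u0 rho b @ rho)) u'"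
  shows "semNN K \<Phi> h lam rho u"
proof -
  have une: "u \<noteq> []" using first u0l by auto
  have "der (p @ u @ s) \<Phi> h (length p + 1) (length p + length u)"
    if pl: "lastn (Suc K) p = lam" and sr: "take (Suc K) s = rho" for p s
  proof (rule derI[OF bh])
    show "1 \<le> length p + 1" by simp
    show "length p + 1 \<le> length p + length u" using une by (simp add: Suc_le_eq)
    show "length p + length u \<le> length (p @ u @ s)" by simp
    show "\<forall>l\<in>set body. lit_holds (p @ u @ s) TT (length p + 1) (length p + length u) l"
    proof
      fix l assume lb: "l \<in> set body"
      have lk: "litb l \<le> K" using bnd_ge[OF bh lb] K by simp
      have "lit_holds (lam @ u0 @ rho) TT (length lam + 1) (length lam + length u0) l"
        using ok lb unfolding okb_def by blast
      then show "lit_holds (p @ u @ s) TT (length p + 1) (length p + length u) l"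
        using lit_transfer[OF refl pl[symmetric] sr[symmetric] une first lk] by simp
    qed
    show "\<forall>S a b. RLit S a b \<in> set body \<longrightarrow> der (p @ u @ s) \<Phi> (HRel S)
        (shift (length (p @ u @ s)) (length p + 1) (int a)) (unshift (length (p @ u @ s)) (length p + length u) b)"
    proof (intro allI impI)
      fix S a b assume rb: "RLit S a b \<in> set body"
      have lk: "a \<le> K" "b \<le> K" using bnd_ge[OF bh rb] K by auto
      obtain u' where uu: "u = iu1 lam u0 rho a @ u' @ iu2 lam u0 rho b"
        and su: "semNN K \<Phi> (HRel S) (lastn (Suc K) (lam @ iu1 lam u0 rho a)) (take (Suc K) (iu2 lam u0 rho b @ rho)) u'"
        using inner[OF rb] by blast
      define u1 where "u1 = iu1 lam u0 rho a"
      define u2 where "u2 = iu2 lam u0 rho b"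
      have okr: "lit_holds (lam @ u0 @ rho) TT (length lam + 1) (length lam + length u0) (RLit S a b)"
        using ok rb unfolding okb_def by blast
      note G = inner_geom[OF refl pl[symmetric] sr[symmetric] une first okr lk u1_def u2_def]
      have e1: "lastn (Suc K) (p @ u1) = lastn (Suc K) (lam @ u1)"
        using lastn_append[of "Suc K" p u1] pl by simp
      have e2: "take (Suc K) (u2 @ s) = take (Suc K) (u2 @ rho)"
        using take_append_take[of "Suc K" u2 s] sr by simp
      have d: "der ((p @ u1) @ u' @ (u2 @ s)) \<Phi> (HRel S) (length (p @ u1) + 1) (length (p @ u1) + length u')"
        using su e1 e2 unfolding semNN_def u1_def[symmetric] u2_def[symmetric] by blast
      have ww: "(p @ u1) @ u' @ (u2 @ s) = p @ u @ s" using uu u1_def u2_def by simp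
      have lu: "length u = length u1 + length u' + length u2" using uu u1_def u2_def by simp
      show "der (p @ u @ s) \<Phi> (HRel S)
        (shift (length (p @ u @ s)) (length p + 1) (int a)) (unshift (length (p @ u @ s)) (length p + length u) b)"
        using d G(1,2) lu unfolding ww by (simp add: add.assoc)
    qed
  qed
  then show ?thesis unfolding semNN_def using une by blast
qed



lemma conjs_mem: "RLit S a b \<in> set body \<Longrightarrow>
  CNT (iu1 lam u0 rho a) (NN (HRel S) (lastn (Suc K) (lam @ iu1 lam u0 rho a)) (take (Suc K) (iu2 lam u0 rho b @ rho)))
      (iu2 lam u0 rho b) \<in> set (conjs K lam u0 rho body)"
  unfolding conjs_def by (force simp: innerc_def)

lemma lastn_short: "length xs \<le> k \<Longrightarrow> lastn k xs = xs"
  by (simp add: lastn_def)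

lemma lastn_cons: "k \<le> length xs \<Longrightarrow> lastn k (a # xs) = lastn k xs"
  by (simp add: lastn_def Suc_diff_le)

lemma soundness:
  assumes K: "K = bnd \<Phi>" and g: "lc_gen (gram K \<Phi>) A w"
  shows "sem K \<Phi> A w"
  using g
proof (induction rule: lc_gen.induct)
  case (1 A cs w)
  have CT: "w = u" if "CTerm u \<in> set cs" for u
  proof -
    have "(\<exists>u'. CTerm u = CTerm u' \<and> w = u') \<or> (\<exists>u' B v w'. CTerm u = CNT u' B v \<and> w = u' @ w' @ v \<and> lc_gen (gram K \<Phi>) B w' \<and> sem K \<Phi> B w')"
      using 1(3) that by blast
    then show ?thesis by simp
  qed
  have CN: "\<exists>w'. w = u @ w' @ v \<and> sem K \<Phi> B w'" if "CNT u B v \<in> set cs" for u B v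
  proof -
    have "(\<exists>u'. CNT u B v = CTerm u' \<and> w = u') \<or> (\<exists>u' B' v' w'. CNT u B v = CNT u' B' v' \<and> w = u' @ w' @ v' \<and> lc_gen (gram K \<Phi>) B' w' \<and> sem K \<Phi> B' w')"
      using 1(3) that by blast
    then show ?thesis by (simp; blast)
  qed
  have "(A, cs) \<in> set allr \<or> (A, cs) \<in> set (topr K) \<or> (A, cs) \<in> set (nnr K \<Phi>)"
    using 1(1) unfolding gram_def by auto
  then show ?case
  proof (elim disjE)
    assume "(A, cs) \<in> set allr"
    then have "A = NAll" using allr_D by blast
    then show ?thesis by simp
  next
    assume "(A, cs) \<in> set (topr K)"
    then obtain lam rho where ll: "length lam \<le> Suc K" "length rho \<le> Suc K" and
      cases: "(A = NR lam rho \<and> cs = [CNT [] (NN HBot lam rho) rho]) \<or>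
    (A = NL lam rho \<and> cs = [CNT lam (NR lam rho) []]) \<or>
    (A = NS \<and> cs = [CNT [] (NL lam rho) []]) \<or>
    (length rho = Suc K \<and> A = NR lam rho \<and> (\<exists>a. cs = [CNT [] (NR lam rho) [a]])) \<or>
    (length lam = Suc K \<and> A = NL lam rho \<and> (\<exists>a. cs = [CNT [a] (NL lam rho) []]))"
      using topr_D[OF \<open>(A, cs) \<in> set (topr K)\<close>] by (elim exE conjE) (rule that, assumption+)
    from cases show ?thesis
    proof (elim disjE conjE exE)
      assume A: "A = NR lam rho" and c: "cs = [CNT [] (NN HBot lam rho) rho]"
      obtain w' where "w = w' @ rho" "semNN K \<Phi> HBot lam rho w'" using CN[of "[]" "NN HBot lam rho" rho] c by auto
      then show ?thesis unfolding A sem.simps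
        by (intro exI[of _ w'] exI[of _ rho]) (use ll in simp)
    next
      assume A: "A = NL lam rho" and c: "cs = [CNT lam (NR lam rho) []]"
      obtain w' where "w = lam @ w'" "sem K \<Phi> (NR lam rho) w'" using CN[of lam "NR lam rho" "[]"] c by auto
      then show ?thesis using A ll lastn_short[of lam "Suc K"] by fastforce
    next
      assume A: "A = NS" and c: "cs = [CNT [] (NL lam rho) []]"
      obtain w' where "w = w'" "sem K \<Phi> (NL lam rho) w'" using CN[of "[]" "NL lam rho" "[]"] c by auto
      then obtain p u s where "w = p @ u @ s" "lastn (Suc K) p = lam" "take (Suc K) s = rho" "semNN K \<Phi> HBot lam rho u"
        by auto
      then have "der w \<Phi> HBot (length p + 1) (length p + length u)" unfolding semNN_def by blast
      then show ?thesis using A by auto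
    next
      fix a assume lr: "length rho = Suc K" and A: "A = NR lam rho" and c: "cs = [CNT [] (NR lam rho) [a]]"
      obtain w' where w: "w = w' @ [a]" and "sem K \<Phi> (NR lam rho) w'" using CN[of "[]" "NR lam rho" "[a]"] c by auto
      then obtain u s where "w' = u @ s" "take (Suc K) s = rho" "semNN K \<Phi> HBot lam rho u" by auto
      moreover have "take (Suc K) (s @ [a]) = take (Suc K) s"
      proof -
        have "Suc K \<le> length s" using arg_cong[OF calculation(2), of length] lr by simp
        then show ?thesis by simp
      qed
      ultimately show ?thesis unfolding A sem.simps using w
        by (intro exI[of _ u] exI[of _ "s @ [a]"]) simp
    next
      fix a assume lr: "length lam = Suc K" and A: "A = NL lam rho" and c: "cs = [CNT [a] (NL lam rho) []]"
      obtain w' where w: "w = [a] @ w'" and "sem K \<Phi> (NL lam rho) w'" using CN[of "[a]" "NL lam rho" "[]"] c by auto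
      then obtain p u s where "w' = p @ u @ s" and pl: "lastn (Suc K) p = lam" "take (Suc K) s = rho" "semNN K \<Phi> HBot lam rho u" by auto
      moreover have "lastn (Suc K) (a # p) = lastn (Suc K) p"
      proof (rule lastn_cons)
        show "Suc K \<le> length p" using arg_cong[OF pl(1), of length] lr by (simp add: length_lastn)
      qed
      ultimately show ?thesis unfolding A sem.simps using w
        by (intro exI[of _ "a # p"] exI[of _ u] exI[of _ s]) simp
    qed
  next
    assume "(A, cs) \<in> set (nnr K \<Phi>)"
    then obtain body h lam rho u0 where bh: "(body, h) \<in> set \<Phi>" and
      ll: "length lam \<le> Suc K" "length rho \<le> Suc K" "1 \<le> length u0" "length u0 \<le> 2 * Suc K + 2" and
      ok: "okb lam u0 rho body" and A: "A = NN h lam rho" and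
      cs: "cs = CTerm u0 # conjs K lam u0 rho body \<or>
    (length u0 = 2 * Suc K + 2 \<and> cs = CNT (take (Suc (Suc K)) u0) NAll (drop (Suc (Suc K)) u0) # conjs K lam u0 rho body)"
      using nnr_D by blast
    have sub: "set (conjs K lam u0 rho body) \<subseteq> set cs" using cs by auto
    have first: "u0 = w \<or> (2 * Suc K + 2 \<le> length w \<and> length u0 = 2 * Suc K + 2 \<and>
        take (Suc (Suc K)) u0 = take (Suc (Suc K)) w \<and> drop (Suc (Suc K)) u0 = drop (length w - Suc (Suc K)) w)"
      using cs
    proof
      assume "cs = CTerm u0 # conjs K lam u0 rho body"
      then show ?thesis using CT by auto
    next
      assume L: "length u0 = 2 * Suc K + 2 \<and> cs = CNT (take (Suc (Suc K)) u0) NAll (drop (Suc (Suc K)) u0) # conjs K lam u0 rho body"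
      then obtain m where w: "w = take (Suc (Suc K)) u0 @ m @ drop (Suc (Suc K)) u0"
        using CN[of "take (Suc (Suc K)) u0" NAll "drop (Suc (Suc K)) u0"] by auto
      have "length (drop (Suc (Suc K)) u0) = Suc (Suc K)" using L by simp
      then have "drop (length w - Suc (Suc K)) w = drop (Suc (Suc K)) u0" unfolding w by simp
      moreover have "take (Suc (Suc K)) w = take (Suc (Suc K)) u0" unfolding w using L by simp
      moreover have "2 * Suc K + 2 \<le> length w" unfolding w using L by simp
      ultimately show ?thesis using L by simp
    qed
    have "semNN K \<Phi> h lam rho w"
    proof (rule sound_NN[OF K bh ok ll(3) first])
      fix S a b assume "RLit S a b \<in> set body"
      then have "CNT (iu1 lam u0 rho a) (NN (HRel S) (lastn (Suc K) (lam @ iu1 lam u0 rho a)) (take (Suc K) (iu2 lam u0 rho b @ rho)))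
      (iu2 lam u0 rho b) \<in> set cs" using conjs_mem sub by blast
      from CN[OF this] show "\<exists>u'. w = iu1 lam u0 rho a @ u' @ iu2 lam u0 rho b \<and>
       semNN K \<Phi> (HRel S) (lastn (Suc K) (lam @ iu1 lam u0 rho a)) (take (Suc K) (iu2 lam u0 rho b @ rho)) u'"
        by simp
    qed
    then show ?thesis using A by simp
  qed
qed



lemma gen_CNT1: "(A, [CNT u B v]) \<in> set P \<Longrightarrow> lc_gen P B w' \<Longrightarrow> lc_gen P A (u @ w' @ v)"
  by (rule lc_gen.intros) auto

lemma all_gen: "lc_gen (gram K \<Phi>) NAll v"
proof (induction v)
  case Nil
  show ?case by (rule lc_gen.intros[of NAll "[CTerm []]"]) (auto simp: gram_def allr_I)
next
  case (Cons a v)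
  have "(NAll, [CNT [a] NAll []]) \<in> set (gram K \<Phi>)" by (auto simp: gram_def allr_I)
  from gen_CNT1[OF this Cons] show ?case by simp
qed

lemma split3: "i \<le> j \<Longrightarrow> j \<le> length u \<Longrightarrow> u = take i u @ drop i (take j u) @ drop j u"
proof -
  assume ij: "i \<le> j"
  have "take i (take j u) @ drop i (take j u) = take j u" by (rule append_take_drop_id)
  moreover have "take i (take j u) = take i u" using ij by (simp add: min_def)
  ultimately show ?thesis by (metis append.assoc append_take_drop_id)
qed

lemma complete_NN:
  assumes K: "K = bnd \<Phi>" and d: "der w \<Phi> h x y"
  shows "\<forall>p u s. w = p @ u @ s \<longrightarrow> x = length p + 1 \<longrightarrow> y = length p + length u \<longrightarrow>
     lc_gen (gram K \<Phi>) (NN h (lastn (Suc K) p) (take (Suc K) s)) u"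
  using d
proof (induction rule: der.induct)
  case (derI body h x y)
  show ?case
  proof (intro allI impI)
    fix p u s assume w: "w = p @ u @ s" and x: "x = length p + 1" and y: "y = length p + length u"
    define lam where "lam = lastn (Suc K) p"
    define rho where "rho = take (Suc K) s"
    have une: "u \<noteq> []" using derI.hyps(3) x y by auto
    define u0 where "u0 = (if length u \<le> 2 * Suc K + 2 then u else take (Suc (Suc K)) u @ drop (length u - Suc (Suc K)) u)"
    have first: "u0 = u \<or> (2 * Suc K + 2 \<le> length u \<and> length u0 = 2 * Suc K + 2 \<and>
        take (Suc (Suc K)) u0 = take (Suc (Suc K)) u \<and> drop (Suc (Suc K)) u0 = drop (length u - Suc (Suc K)) u)"
      unfolding u0_def by auto
    have l0: "1 \<le> length u0" "length u0 \<le> 2 * Suc K + 2" using une unfolding u0_def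
      by (auto simp: Suc_le_eq)
    have ll: "length lam \<le> Suc K" "length rho \<le> Suc K" unfolding lam_def rho_def by (auto simp: length_lastn)
    have ok: "okb lam u0 rho body" unfolding okb_def
    proof
      fix l assume lb: "l \<in> set body"
      have lk: "litb l \<le> K" using bnd_ge[OF derI.hyps(1) lb] K by simp
      have "lit_holds w TT x y l" using derI.hyps(5) lb by blast
      then show "lit_holds (lam @ u0 @ rho) TT (length lam + 1) (length lam + length u0) l"
        using lit_transfer[OF w lam_def rho_def une first lk] x y by simp
    qed
    define hc :: "('a, 'a nt) conjunct" where "hc = (if length u \<le> 2 * Suc K + 2 then CTerm u0 else CNT (take (Suc (Suc K)) u0) NAll (drop (Suc (Suc K)) u0))"
    have mem: "(NN h lam rho, hc # conjs K lam u0 rho body) \<in> set (gram K \<Phi>)"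
    proof (cases "length u \<le> 2 * Suc K + 2")
      case True
      then show ?thesis unfolding hc_def gram_def using nnr_I1[OF derI.hyps(1) ll l0 ok] by simp
    next
      case False
      have "length u0 = 2 * Suc K + 2" using False unfolding u0_def by simp
      then show ?thesis unfolding hc_def gram_def using nnr_I2[OF derI.hyps(1) ll _ ok] False by simp
    qed
    have "lc_gen (gram K \<Phi>) (NN h lam rho) u"
    proof (rule lc_gen.intros[OF mem], simp, intro ballI)
      fix c assume c: "c \<in> set (hc # conjs K lam u0 rho body)"
      show "(\<exists>u'. c = CTerm u' \<and> u = u') \<or>
        (\<exists>u' B v w'. c = CNT u' B v \<and> u = u' @ w' @ v \<and> lc_gen (gram K \<Phi>) B w')"
      proof (cases "c = hc")
        case True
        show ?thesis
        proof (cases "length u \<le> 2 * Suc K + 2")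
          case T: True
          then show ?thesis using True unfolding hc_def u0_def by simp
        next
          case F: False
          define m where "m = drop (Suc (Suc K)) (take (length u - Suc (Suc K)) u)"
          have "u = take (Suc (Suc K)) u @ m @ drop (length u - Suc (Suc K)) u"
            unfolding m_def by (rule split3) (use F in auto)
          moreover have "take (Suc (Suc K)) u0 = take (Suc (Suc K)) u" "drop (Suc (Suc K)) u0 = drop (length u - Suc (Suc K)) u"
            using F unfolding u0_def by auto
          ultimately show ?thesis using True F all_gen unfolding hc_def by auto
        qed
      next
        case False
        then have "c \<in> set (conjs K lam u0 rho body)" using c by simp
        then obtain l where lb: "l \<in> set body" and cl: "c \<in> set (innerc K lam u0 rho l)"
          unfolding conjs_def by auto
        then obtain S a b where l: "l = RLit S a b" by (cases l) (auto simp: innerc_def)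
        define u1 where "u1 = iu1 lam u0 rho a"
        define u2 where "u2 = iu2 lam u0 rho b"
        have c': "c = CNT u1 (NN (HRel S) (lastn (Suc K) (lam @ u1)) (take (Suc K) (u2 @ rho))) u2"
          using cl l unfolding innerc_def u1_def u2_def by simp
        have rb: "RLit S a b \<in> set body" using lb l by simp
        have lk: "a \<le> K" "b \<le> K" using bnd_ge[OF derI.hyps(1) rb] K by auto
        have okr: "lit_holds (lam @ u0 @ rho) TT (length lam + 1) (length lam + length u0) (RLit S a b)"
          using ok rb unfolding okb_def by blast
        note G = inner_geom[OF w lam_def rho_def une first okr lk u1_def u2_def]
        define u' where "u' = drop (length u1) (take (length u - length u2) u)"
        have uu: "u = u1 @ u' @ u2"
          using split3[of "length u1" "length u - length u2" u] G(3,4,5) unfolding u'_def by simp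
        have IH: "\<forall>p u s. w = p @ u @ s \<longrightarrow> shift (length w) x (int a) = length p + 1 \<longrightarrow>
            unshift (length w) y b = length p + length u \<longrightarrow>
            lc_gen (gram K \<Phi>) (NN (HRel S) (lastn (Suc K) p) (take (Suc K) s)) u"
          using derI.IH rb by blast
        have ww: "w = (p @ u1) @ u' @ (u2 @ s)" using w uu by simp
        have lu: "length u = length u1 + length u' + length u2" using uu by simp
        have g: "lc_gen (gram K \<Phi>) (NN (HRel S) (lastn (Suc K) (p @ u1)) (take (Suc K) (u2 @ s))) u'"
        proof (rule IH[rule_format, of "p @ u1" u' "u2 @ s"])
          show "w = (p @ u1) @ u' @ u2 @ s" using ww by simp
          show "shift (length w) x (int a) = length (p @ u1) + 1" using G(1) x by simp
          show "unshift (length w) y b = length (p @ u1) + length u'" using G(2) y lu by simp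
        qed
        have e1: "lastn (Suc K) (p @ u1) = lastn (Suc K) (lam @ u1)"
          using lastn_append[of "Suc K" p u1] lam_def by simp
        have e2: "take (Suc K) (u2 @ s) = take (Suc K) (u2 @ rho)"
          using take_append_take[of "Suc K" u2 s] rho_def by simp
        show ?thesis using g e1 e2 uu c' by auto
      qed
    qed
    then show "lc_gen (gram K \<Phi>) (NN h (lastn (Suc K) p) (take (Suc K) s)) u"
      unfolding lam_def rho_def .
  qed
qed



lemma der_range: "der w \<Phi> h x y \<Longrightarrow> 1 \<le> x \<and> x \<le> y \<and> y \<le> length w"
  by (induction rule: der.induct) auto

lemma top_complete:
  assumes K: "K = bnd \<Phi>" and d: "der w \<Phi> HBot x y"
  shows "lc_gen (gram K \<Phi>) NS w"
proof -
  have r: "1 \<le> x" "x \<le> y" "y \<le> length w" using der_range[OF d] by auto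
  define p where "p = take (x - 1) w"
  define u where "u = drop (x - 1) (take y w)"
  define s where "s = drop y w"
  have w: "w = p @ u @ s" unfolding p_def u_def s_def using r
    by (metis append.assoc append_take_drop_id diff_le_self le_trans min.absorb1 take_take)
  have lp: "length p = x - 1" "length u = y - (x - 1)" unfolding p_def u_def using r by auto
  define lam where "lam = lastn (Suc K) p"
  define rho where "rho = take (Suc K) s"
  have ll: "length lam \<le> Suc K" "length rho \<le> Suc K" unfolding lam_def rho_def by (auto simp: length_lastn)
  have gNN: "lc_gen (gram K \<Phi>) (NN HBot lam rho) u"
    using complete_NN[OF K d] w lp r unfolding lam_def rho_def by auto
  have gR: "lc_gen (gram K \<Phi>) (NR lam rho) (u @ rho @ t)" if "t = [] \<or> length rho = Suc K" for t
    using that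
  proof (induction t rule: rev_induct)
    case Nil
    have "(NR lam rho, [CNT [] (NN HBot lam rho) rho]) \<in> set (gram K \<Phi>)"
      unfolding gram_def using topr_I(1)[OF ll] by simp
    from gen_CNT1[OF this gNN] show ?case by simp
  next
    case (snoc a t)
    then have lr: "length rho = Suc K" by simp
    then have "(NR lam rho, [CNT [] (NR lam rho) [a]]) \<in> set (gram K \<Phi>)"
      unfolding gram_def using topr_I2[OF ll(1) lr] by simp
    from gen_CNT1[OF this snoc.IH] lr show ?case by simp
  qed
  have sR: "s = rho @ drop (Suc K) s" unfolding rho_def by simp
  have "drop (Suc K) s = [] \<or> length rho = Suc K" unfolding rho_def by auto
  then have gR': "lc_gen (gram K \<Phi>) (NR lam rho) (u @ s)" using gR sR by metis
  have gL: "lc_gen (gram K \<Phi>) (NL lam rho) (t @ lam @ u @ s)" if "t = [] \<or> length lam = Suc K" for t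
    using that
  proof (induction t)
    case Nil
    have "(NL lam rho, [CNT lam (NR lam rho) []]) \<in> set (gram K \<Phi>)"
      unfolding gram_def using topr_I(2)[OF ll] by simp
    from gen_CNT1[OF this gR'] show ?case by simp
  next
    case (Cons a t)
    then have lr: "length lam = Suc K" by simp
    then have "(NL lam rho, [CNT [a] (NL lam rho) []]) \<in> set (gram K \<Phi>)"
      unfolding gram_def using topr_I3[OF lr ll(2)] by simp
    from gen_CNT1[OF this Cons.IH] lr show ?case by simp
  qed
  have pL: "p = take (length p - Suc K) p @ lam" unfolding lam_def lastn_def by simp
  have "take (length p - Suc K) p = [] \<or> length lam = Suc K" unfolding lam_def by (auto simp: length_lastn)
  then have gL': "lc_gen (gram K \<Phi>) (NL lam rho) (p @ u @ s)" using gL pL by (metis append.assoc)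
  have "(NS, [CNT [] (NL lam rho) []]) \<in> set (gram K \<Phi>)"
    unfolding gram_def using topr_I(3)[OF ll] by simp
  from gen_CNT1[OF this gL'] show ?thesis using w by simp
qed

lemma gram_lang:
  assumes K: "K = bnd \<Phi>"
  shows "{w. lc_gen (gram K \<Phi>) NS w} = {w. \<exists>x y. der w \<Phi> HBot x y}"
proof (intro set_eqI iffI; simp)
  fix w assume "lc_gen (gram K \<Phi>) NS w"
  from soundness[OF K this] show "\<exists>x y. der w \<Phi> HBot x y" by simp
next
  fix w assume "\<exists>x y. der w \<Phi> HBot x y"
  then show "lc_gen (gram K \<Phi>) NS w" using top_complete[OF K] by blast
qed



instance head :: countable by countable_datatype
instance nt :: (countable) countable by countable_datatype

definition mapr :: "('n \<Rightarrow> 'm) \<Rightarrow> ('a, 'n) lrule list \<Rightarrow> ('a, 'm) lrule list" where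
  "mapr f P = map (\<lambda>(A, cs). (f A, map (map_conjunct id f) cs)) P"

lemma gen_map1: "lc_gen P A w \<Longrightarrow> lc_gen (mapr f P) (f A) w"
proof (induction rule: lc_gen.induct)
  case (1 A cs w)
  show ?case
  proof (rule lc_gen.intros)
    show "(f A, map (map_conjunct id f) cs) \<in> set (mapr f P)" using 1(1) unfolding mapr_def by force
    show "map (map_conjunct id f) cs \<noteq> []" using 1(2) by simp
    show "\<forall>c\<in>set (map (map_conjunct id f) cs). (\<exists>u. c = CTerm u \<and> w = u) \<or>
      (\<exists>u B v w'. c = CNT u B v \<and> w = u @ w' @ v \<and> lc_gen (mapr f P) B w')"
    proof
      fix c assume "c \<in> set (map (map_conjunct id f) cs)"
      then obtain c0 where c0: "c0 \<in> set cs" "c = map_conjunct id f c0" by auto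
      have "(\<exists>u. c0 = CTerm u \<and> w = u) \<or>
        (\<exists>u B v w'. c0 = CNT u B v \<and> w = u @ w' @ v \<and> lc_gen P B w' \<and> lc_gen (mapr f P) (f B) w')"
        using 1(3) c0(1) by blast
      then show "(\<exists>u. c = CTerm u \<and> w = u) \<or>
        (\<exists>u B v w'. c = CNT u B v \<and> w = u @ w' @ v \<and> lc_gen (mapr f P) B w')"
        using c0(2) by auto
    qed
  qed
qed

lemma gen_map2: "lc_gen (mapr f P) B w \<Longrightarrow> inj f \<Longrightarrow> B = f A \<Longrightarrow> lc_gen P A w"
proof (induction arbitrary: A rule: lc_gen.induct)
  case (1 B cs' w)
  obtain A0 cs where r: "(A0, cs) \<in> set P" and e: "B = f A0" "cs' = map (map_conjunct id f) cs"
    using 1(1) unfolding mapr_def by auto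
  have A0: "A0 = A" using e(1) 1(5) 1(4) by (simp add: inj_eq)
  show ?case
  proof (rule lc_gen.intros[OF r[unfolded A0]])
    show "cs \<noteq> []" using 1(2) e by simp
    show "\<forall>c\<in>set cs. (\<exists>u. c = CTerm u \<and> w = u) \<or>
      (\<exists>u B v w'. c = CNT u B v \<and> w = u @ w' @ v \<and> lc_gen P B w')"
    proof
      fix c assume c: "c \<in> set cs"
      then have "map_conjunct id f c \<in> set cs'" using e by simp
      then have h: "(\<exists>u. map_conjunct id f c = CTerm u \<and> w = u) \<or>
        (\<exists>u B v w'. map_conjunct id f c = CNT u B v \<and> w = u @ w' @ v \<and> lc_gen (mapr f P) B w' \<and>
          (\<forall>A. inj f \<longrightarrow> B = f A \<longrightarrow> lc_gen P A w'))"
        using 1(3) by blast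
      show "(\<exists>u. c = CTerm u \<and> w = u) \<or>
        (\<exists>u B v w'. c = CNT u B v \<and> w = u @ w' @ v \<and> lc_gen P B w')"
      proof (cases c)
        case (CTerm u)
        then show ?thesis using h by simp
      next
        case (CNT u B0 v)
        then show ?thesis using h 1(4) by auto
      qed
    qed
  qed
qed

lemma LinConj_of_nt:
  fixes P :: "('a, 'a::finite nt) lrule list"
  shows "{w. lc_gen P S w} \<in> LinConj"
proof -
  let ?f = "to_nat :: 'a nt \<Rightarrow> nat"
  have "{w. lc_gen P S w} = {w. lc_gen (mapr ?f P) (?f S) w}"
    using gen_map1[of P S _ ?f] gen_map2[of ?f P "?f S" _ S] by auto
  then show ?thesis unfolding LinConj_def by blast
qed

theorem lemma7:
  fixes L :: "('a :: finite) list set"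
  assumes "L \<subseteq> {w. w \<noteq> []}"
    and "L \<in> incl_ESO_HORN"
  shows "{w. w \<noteq> []} - L \<in> LinConj"
proof -
  obtain \<Phi> where L: "L = {w. w \<noteq> [] \<and> ihorn_models w \<Phi>}"
    using assms(2) unfolding incl_ESO_HORN_def by blast
  have "{w. w \<noteq> []} - L = {w. \<exists>x y. der w \<Phi> HBot x y}"
  proof (intro set_eqI iffI)
    fix w assume "w \<in> {w. w \<noteq> []} - L"
    then show "w \<in> {w. \<exists>x y. der w \<Phi> HBot x y}" unfolding L using models_iff[of w \<Phi>] by auto
  next
    fix w assume "w \<in> {w. \<exists>x y. der w \<Phi> HBot x y}"
    then obtain x y where d: "der w \<Phi> HBot x y" by blast
    then have "w \<noteq> []" using der_range[OF d] by auto
    then show "w \<in> {w. w \<noteq> []} - L" unfolding L using models_iff[of w \<Phi>] d by auto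
  qed
  also have "\<dots> = {w. lc_gen (gram (bnd \<Phi>) \<Phi>) NS w}" using gram_lang[of "bnd \<Phi>" \<Phi>] by simp
  finally show ?thesis using LinConj_of_nt by simp
qed


end
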